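(* Let $\mathcal{G}=(V,\mathcal{E},T)$ be a happy temporally connected temporal graph, and let $X$ be a vertex cover of its underlying graph $G_U$ with $|X|=d$. Let $\mathcal{S}$ be a minimum temporal spanner of $\mathcal{G}$ (one with the minimum number of time edges). Then the set of time edges of $\mathcal{S}$ is the union of the time-edge sets of at most $d$ temporal out-trees, each rooted at a vertex of $X$, together with at most one extra time edge incident to each vertex of $V\setminus X$.
   Context: A temporal graph is a triple $\mathcal{G}=(V,\mathcal{E},T)$ with finite vertex set $V$, time edges $\mathcal{E}\subseteq\binom{V}{2}\times\{1,\dots,T\}$ and maximum label $T$; its underlying graph $G_U$ has edge set $\{e:\exists t,(e,t)\in\mathcal{E}\}$. $\mathcal{G}$ is happy if every underlying edge has exactly one label and no two time edges sharing an endpoint have the same label (so time edges and underlying edges can be identified). A temporal path is a sequence of time edges $(e_1,t_1),\dots,(e_r,t_r)$ such that $e_1,\dots,e_r$ form a static path and $t_1<\dots<t_r$. $\mathcal{G}$ is temporally connected if every vertex has a temporal path to every other vertex. A temporal spanner of $\mathcal{G}$ is a temporally connected $(V,\mathcal{E}',T')$ with $\mathcal{E}'\subseteq\mathcal{E}$, $T'\le T$. A temporal out-tree rooted at $r$ (in $\mathcal{G}$) is a temporal subgraph $(V,\mathcal{E}_r,T)$, $\mathcal{E}_r\subseteq\mathcal{E}$, whose underlying graph is a spanning tree of $V$ and in which $r$ has a temporal path to every vertex of $V$. *)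

theory Defs
  imports Main
begin

type_synonym 'v tedge = "'v set \<times> nat"

definition temporal_graph :: "'v set \<Rightarrow> 'v tedge set \<Rightarrow> nat \<Rightarrow> bool" where
  "temporal_graph V E T \<longleftrightarrow> finite V \<and>
     (\<forall>(e,t)\<in>E. e \<subseteq> V \<and> card e = 2 \<and> 1 \<le> t \<and> t \<le> T)"

definition underlying :: "'v tedge set \<Rightarrow> 'v set set" where
  "underlying E = fst ` E"

definition happy :: "'v tedge set \<Rightarrow> bool" where
  "happy E \<longleftrightarrow>
     (\<forall>e\<in>underlying E. \<exists>!t. (e,t) \<in> E) \<and>
     (\<forall>(e,t)\<in>E. \<forall>(e',t')\<in>E. (e,t) \<noteq> (e',t') \<and> e \<inter> e' \<noteq> {} \<longrightarrow> t \<noteq> t')"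

definition temporal_path :: "'v tedge set \<Rightarrow> 'v \<Rightarrow> 'v \<Rightarrow> bool" where
  "temporal_path E u v \<longleftrightarrow> (\<exists>vs ts.
     length vs = Suc (length ts) \<and> distinct vs \<and> hd vs = u \<and> last vs = v \<and>
     sorted_wrt (<) ts \<and>
     (\<forall>i < length ts. ({vs ! i, vs ! Suc i}, ts ! i) \<in> E))"

definition temporally_connected :: "'v set \<Rightarrow> 'v tedge set \<Rightarrow> bool" where
  "temporally_connected V E \<longleftrightarrow>
     (\<forall>u\<in>V. \<forall>v\<in>V. u \<noteq> v \<longrightarrow> temporal_path E u v)"

text \<open>A temporal spanner (V, E', T') with T' \<le> T; we take T' = T, which is no restriction
  since all labels of E' \<subseteq> E are \<le> T and connectivity does not depend on T'.\<close>
definition temporal_spanner :: "'v set \<Rightarrow> 'v tedge set \<Rightarrow> 'v tedge set \<Rightarrow> bool" where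
  "temporal_spanner V E E' \<longleftrightarrow> E' \<subseteq> E \<and> temporally_connected V E'"

definition minimum_temporal_spanner :: "'v set \<Rightarrow> 'v tedge set \<Rightarrow> 'v tedge set \<Rightarrow> bool" where
  "minimum_temporal_spanner V E S \<longleftrightarrow> temporal_spanner V E S \<and>
     (\<forall>S'. temporal_spanner V E S' \<longrightarrow> card S \<le> card S')"

definition static_path :: "'v set set \<Rightarrow> 'v list \<Rightarrow> bool" where
  "static_path F vs \<longleftrightarrow> vs \<noteq> [] \<and> distinct vs \<and>
     (\<forall>i. Suc i < length vs \<longrightarrow> {vs ! i, vs ! Suc i} \<in> F)"

definition connected_graph :: "'v set \<Rightarrow> 'v set set \<Rightarrow> bool" where
  "connected_graph V F \<longleftrightarrow> (\<forall>u\<in>V. \<forall>v\<in>V.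
     \<exists>vs. static_path F vs \<and> set vs \<subseteq> V \<and> hd vs = u \<and> last vs = v)"

definition has_cycle :: "'v set set \<Rightarrow> bool" where
  "has_cycle F \<longleftrightarrow> (\<exists>vs. length vs \<ge> 3 \<and> static_path F vs \<and> {last vs, hd vs} \<in> F)"

definition spanning_tree :: "'v set \<Rightarrow> 'v set set \<Rightarrow> bool" where
  "spanning_tree V F \<longleftrightarrow> (\<forall>e\<in>F. e \<subseteq> V \<and> card e = 2) \<and>
     connected_graph V F \<and> \<not> has_cycle F"

definition temporal_out_tree :: "'v set \<Rightarrow> 'v tedge set \<Rightarrow> 'v \<Rightarrow> 'v tedge set \<Rightarrow> bool" where
  "temporal_out_tree V E r Er \<longleftrightarrow> Er \<subseteq> E \<and> r \<in> V \<and>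
     spanning_tree V (underlying Er) \<and>
     (\<forall>v\<in>V. v \<noteq> r \<longrightarrow> temporal_path Er r v)"

definition vertex_cover :: "'v set \<Rightarrow> 'v set set \<Rightarrow> 'v set \<Rightarrow> bool" where
  "vertex_cover V F X \<longleftrightarrow> X \<subseteq> V \<and> (\<forall>e\<in>F. e \<inter> X \<noteq> {})"

end

theory Submission
  imports Defs
begin

definition jrn :: "'v tedge set \<Rightarrow> 'v list \<Rightarrow> nat list \<Rightarrow> bool" where
  "jrn S vs ts \<longleftrightarrow> length vs = Suc (length ts) \<and> distinct vs \<and> sorted_wrt (<) ts \<and>
     (\<forall>i < length ts. ({vs ! i, vs ! Suc i}, ts ! i) \<in> S)"

lemma tp_jrn: "temporal_path S u v \<longleftrightarrow> (\<exists>vs ts. jrn S vs ts \<and> hd vs = u \<and> last vs = v)"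
  unfolding temporal_path_def jrn_def by blast

lemma jrn_mono: "jrn S vs ts \<Longrightarrow> S \<subseteq> S' \<Longrightarrow> jrn S' vs ts"
  unfolding jrn_def by blast

lemma sorted_le_last: "sorted_wrt (<) (ts::nat list) \<Longrightarrow> s \<in> set ts \<Longrightarrow> s \<le> last ts"
  by (induction ts) (auto simp: less_imp_le)

lemma sorted_hd_le: "sorted_wrt (<) (ts::nat list) \<Longrightarrow> s \<in> set ts \<Longrightarrow> hd ts \<le> s"
  by (induction ts) (auto simp: less_imp_le)

lemma jrn_drop: assumes "jrn S vs ts" "i \<le> length ts"
  shows "jrn S (drop i vs) (drop i ts)"
  using assms unfolding jrn_def
  by (auto simp: sorted_wrt_iff_nth_less)

lemma jrn_cons: assumes "jrn S vs ts" "a \<notin> set vs" "({a, hd vs}, t) \<in> S" "ts = [] \<or> t < hd ts"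
  shows "jrn S (a#vs) (t#ts)"
proof -
  have ne: "vs \<noteq> []" using assms(1) unfolding jrn_def by auto
  have s: "sorted_wrt (<) (t#ts)"
    using assms(1,4) sorted_hd_le[of ts] unfolding jrn_def
    by (auto intro: less_le_trans)
  have e: "\<forall>i < length (t#ts). ({(a#vs) ! i, (a#vs) ! Suc i}, (t#ts) ! i) \<in> S"
  proof (intro allI impI)
    fix i assume "i < length (t#ts)"
    then show "({(a#vs) ! i, (a#vs) ! Suc i}, (t#ts) ! i) \<in> S"
      using assms(1,3) ne unfolding jrn_def by (cases i) (auto simp: hd_conv_nth)
  qed
  show ?thesis using assms(1,2) s e unfolding jrn_def by auto
qed

lemma jrn_snoc: assumes "jrn S vs ts" "w \<notin> set vs" "({last vs, w}, t) \<in> S" "\<forall>s\<in>set ts. s < t"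
  shows "jrn S (vs@[w]) (ts@[t])"
proof -
  have ne: "vs \<noteq> []" using assms(1) unfolding jrn_def by auto
  have s: "sorted_wrt (<) (ts@[t])"
    using assms(1,4) unfolding jrn_def by (auto simp: sorted_wrt_append)
  have e: "\<forall>i < length (ts@[t]). ({(vs@[w]) ! i, (vs@[w]) ! Suc i}, (ts@[t]) ! i) \<in> S"
  proof (intro allI impI)
    fix i assume i: "i < length (ts@[t])"
    show "({(vs@[w]) ! i, (vs@[w]) ! Suc i}, (ts@[t]) ! i) \<in> S"
    proof (cases "i < length ts")
      case True then show ?thesis using assms(1) unfolding jrn_def by (auto simp: nth_append)
    next
      case False then have "i = length ts" using i by auto
      then show ?thesis using assms(1,3) ne unfolding jrn_def by (auto simp: nth_append last_conv_nth)
    qed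
  qed
  show ?thesis using assms(1,2) s e unfolding jrn_def by auto
qed

lemma jrn_from: assumes "jrn S vs ts" "y \<in> set vs" "y \<noteq> last vs"
  shows "\<exists>vs' ts'. jrn S vs' ts' \<and> hd vs' = y \<and> last vs' = last vs \<and> ts' \<noteq> [] \<and> hd ts \<le> hd ts'"
proof -
  obtain i where i: "i < length vs" "vs ! i = y" using assms(2) by (auto simp: in_set_conv_nth)
  have L: "length vs = Suc (length ts)" and so: "sorted_wrt (<) ts" using assms(1) unfolding jrn_def by auto
  have "i \<noteq> length ts" proof
    assume "i = length ts"
    then have "y = last vs" using i L by (metis diff_Suc_1 last_conv_nth list.size(3) nat.distinct(1))
    then show False using assms(3) by simp
  qed
  then have il: "i < length ts" using i L by auto
  have j: "jrn S (drop i vs) (drop i ts)" using jrn_drop[OF assms(1)] il by auto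
  have "hd (drop i vs) = y" using i by (simp add: hd_drop_conv_nth)
  moreover have "last (drop i vs) = last vs" using i by simp
  moreover have "drop i ts \<noteq> []" using il by simp
  moreover have "hd ts \<le> hd (drop i ts)"
    using il so sorted_hd_le[OF so, of "ts ! i"] by (simp add: hd_drop_conv_nth)
  ultimately show ?thesis using j by blast
qed

lemma prepend:
  assumes hap: "happy E" and SE: "S \<subseteq> E" and e: "({a,b},t) \<in> S"
    and j: "jrn S vs ts" "hd vs = b" "last vs = w" and w: "w \<noteq> a" "w \<noteq> b" and t: "t \<le> hd ts"
  shows "\<exists>vs' ts'. jrn S vs' ts' \<and> hd vs' = a \<and> last vs' = w \<and> ts' \<noteq> [] \<and> t \<le> hd ts'"
proof -
  have L: "length vs = Suc (length ts)" and d: "distinct vs"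
    and ed: "\<forall>i < length ts. ({vs ! i, vs ! Suc i}, ts ! i) \<in> S" using j(1) unfolding jrn_def by auto
  have tsne: "ts \<noteq> []"
  proof
    assume "ts = []" then have "vs = [hd vs]" using L by (cases vs) auto
    then have "last vs = hd vs" by (metis last.simps)
    then show False using j w by simp
  qed
  show ?thesis
  proof (cases "a \<in> set vs")
    case True
    from jrn_from[OF j(1) True] w j t show ?thesis by fastforce
  next
    case False
    have "t \<noteq> hd ts"
    proof
      assume th: "t = hd ts"
      have e1: "({vs ! 0, vs ! 1}, ts ! 0) \<in> S" using ed tsne by auto
      have v0: "vs ! 0 = b" using j(2) L by (cases vs) auto
      have "ts ! 0 = t" using th tsne by (simp add: hd_conv_nth)
      have "vs ! 1 \<noteq> b" using d v0 L tsne by (metis One_nat_def Suc_less_eq distinct_conv_nth length_greater_0_conv n_not_Suc_n zero_less_Suc)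
      have "({b, vs ! 1}, t) = ({a,b},t)"
      proof (rule ccontr)
        assume ne: "({b, vs ! 1}, t) \<noteq> ({a,b},t)"
        have "({b, vs ! 1}, t) \<in> E" "({a,b},t) \<in> E" using e1 v0 \<open>ts ! 0 = t\<close> e SE by auto
        then show False using hap ne unfolding happy_def by fastforce
      qed
      then have "vs ! 1 = a" using \<open>vs ! 1 \<noteq> b\<close> by (auto simp: doubleton_eq_iff)
      then have "a \<in> set vs" using L tsne by (metis One_nat_def Suc_less_eq length_greater_0_conv nth_mem)
      then show False using False by simp
    qed
    then have "t < hd ts" using t by simp
    then have "jrn S (a#vs) (t#ts)" using jrn_cons[OF j(1) False] e j(2) by auto
    moreover have "last (a#vs) = w" using j L by auto
    ultimately show ?thesis by fastforce
  qed
qed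

lemma jrn_butlast:
  assumes j: "jrn S vs ts" and ne: "ts \<noteq> []"
  shows "jrn S (butlast vs) (butlast ts) \<and> ({last (butlast vs), last vs}, last ts) \<in> S \<and>
    last vs \<notin> set (butlast vs) \<and> (\<forall>s\<in>set (butlast ts). s < last ts) \<and> butlast vs \<noteq> [] \<and>
    hd (butlast vs) = hd vs \<and> (butlast ts \<noteq> [] \<longrightarrow> hd (butlast ts) = hd ts)"
proof -
  have L: "length vs = Suc (length ts)" and d: "distinct vs" and so: "sorted_wrt (<) ts"
    and ed: "\<forall>i < length ts. ({vs ! i, vs ! Suc i}, ts ! i) \<in> S" using j unfolding jrn_def by auto
  have tsd: "ts = butlast ts @ [last ts]" using ne by simp
  have vsd: "vs = butlast vs @ [last vs]" using L by (metis append_butlast_last_id list.size(3) nat.distinct(1))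
  have so2: "sorted_wrt (<) (butlast ts) \<and> (\<forall>s\<in>set (butlast ts). s < last ts)"
    using so tsd by (metis sorted_wrt_append list.set_intros(1) )
  have bvne: "butlast vs \<noteq> []" using L ne by (cases vs) auto
  have j1: "jrn S (butlast vs) (butlast ts)"
    unfolding jrn_def using L d so2 ed ne by (auto simp: nth_butlast distinct_butlast)
  have "length ts - 1 < length ts" using ne by simp
  then have "({vs ! (length ts - 1), vs ! Suc (length ts - 1)}, ts ! (length ts - 1)) \<in> S" using ed by blast
  moreover have "vs ! (length ts - 1) = last (butlast vs)" using L ne
    by (simp add: last_conv_nth nth_butlast bvne)
  moreover have "vs ! Suc (length ts - 1) = last vs"
  proof -
    have "vs \<noteq> []" "Suc (length ts - 1) = length vs - 1" using L ne by auto
    then show ?thesis by (simp add: last_conv_nth)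
  qed
  moreover have "ts ! (length ts - 1) = last ts" using ne by (simp add: last_conv_nth)
  ultimately have e: "({last (butlast vs), last vs}, last ts) \<in> S" by simp
  have nin: "last vs \<notin> set (butlast vs)" using d vsd by (metis distinct_append disjoint_iff list.set_intros(1))
  have h1: "hd (butlast vs) = hd vs" using bvne vsd by (metis hd_append2)
  have h2: "butlast ts \<noteq> [] \<longrightarrow> hd (butlast ts) = hd ts" using tsd by (metis hd_append2)
  show ?thesis using j1 e nin so2 bvne h1 h2 by blast
qed

lemma walk_path:
  assumes "(u,v) \<in> {(a,b). {a,b} \<in> Fu}\<^sup>*" "u \<in> V" "\<forall>e\<in>Fu. e \<subseteq> V"
  shows "\<exists>vs. static_path Fu vs \<and> set vs \<subseteq> V \<and> hd vs = u \<and> last vs = v"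
  using assms(1)
proof (induction rule: rtrancl_induct)
  case base
  then show ?case using assms(2) unfolding static_path_def by (intro exI[of _ "[u]"]) auto
next
  case (step y z)
  then obtain vs where vs: "static_path Fu vs" "set vs \<subseteq> V" "hd vs = u" "last vs = y" by blast
  have yz: "{y,z} \<in> Fu" using step by auto
  have ne: "vs \<noteq> []" and d: "distinct vs" and ed: "\<forall>i. Suc i < length vs \<longrightarrow> {vs ! i, vs ! Suc i} \<in> Fu"
    using vs(1) unfolding static_path_def by auto
  show ?case
  proof (cases "z \<in> set vs")
    case True
    then obtain i where i: "i < length vs" "vs ! i = z" by (auto simp: in_set_conv_nth)
    have "static_path Fu (take (Suc i) vs)" unfolding static_path_def using ne d ed i by auto
    moreover have "set (take (Suc i) vs) \<subseteq> V" using vs(2) by (meson order_trans set_take_subset)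
    moreover have "hd (take (Suc i) vs) = u" using vs(3) ne by simp
    moreover have "last (take (Suc i) vs) = z" using i by (simp add: take_Suc_conv_app_nth)
    ultimately show ?thesis by blast
  next
    case False
    have "static_path Fu (vs @ [z])" unfolding static_path_def
    proof (intro conjI allI impI)
      show "vs @ [z] \<noteq> []" by simp
      show "distinct (vs @ [z])" using d False by simp
      fix i assume i: "Suc i < length (vs @ [z])"
      show "{(vs @ [z]) ! i, (vs @ [z]) ! Suc i} \<in> Fu"
      proof (cases "Suc i < length vs")
        case True then show ?thesis using ed by (auto simp: nth_append)
      next
        case False
        then have "Suc i = length vs" using i by simp
        then have ii: "i = length vs - 1" by arith
        then show ?thesis using yz vs(4) ne by (auto simp: nth_append last_conv_nth)
      qed
    qed
    moreover have "z \<in> V" using yz assms(3) by blast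
    ultimately show ?thesis using vs ne by (intro exI[of _ "vs @ [z]"]) auto
  qed
qed

lemma no_cycle_rank:
  fixes rk :: "'v \<Rightarrow> nat"
  assumes A: "\<forall>e\<in>Fu. \<exists>w. e = {w, p w} \<and> rk (p w) < rk w"
  shows "\<not> has_cycle Fu"
proof
  assume "has_cycle Fu"
  then obtain vs where len: "length vs \<ge> 3" and sp: "static_path Fu vs" and cl: "{last vs, hd vs} \<in> Fu"
    unfolding has_cycle_def by blast
  define n where "n = length vs"
  have d: "distinct vs" and ed: "\<forall>i. Suc i < length vs \<longrightarrow> {vs ! i, vs ! Suc i} \<in> Fu"
    using sp unfolding static_path_def by auto
  define nx where "nx j = (if Suc j = n then 0 else Suc j)" for j
  have E: "{vs ! j, vs ! nx j} \<in> Fu" if "j < n" for j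
  proof (cases "Suc j = n")
    case True
    have ne': "vs \<noteq> []" using len by auto
    have "j = length vs - 1" using True unfolding n_def by arith
    then have "vs ! j = last vs" using ne' by (simp add: last_conv_nth)
    moreover have "vs ! 0 = hd vs" using ne' by (simp add: hd_conv_nth)
    ultimately show ?thesis using cl True unfolding nx_def by (simp add: insert_commute)
  next
    case False
    then show ?thesis using ed that unfolding nx_def n_def by auto
  qed
  have ne: "vs \<noteq> []" using len by auto
  define m where "m = Max (rk ` set vs)"
  have "m \<in> rk ` set vs" unfolding m_def using ne by simp
  then obtain j where j: "j < n" "rk (vs ! j) = m" unfolding n_def by (auto simp: in_set_conv_nth)
  have mx: "rk a \<le> rk (vs ! j)" if "a \<in> set vs" for a
  proof -
    have "rk a \<le> m" unfolding m_def using that by (intro Max_ge) auto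
    then show ?thesis using j(2) by simp
  qed
  have key: "a = p (vs ! j)" if "{a, vs ! j} \<in> Fu" "a \<in> set vs" "a \<noteq> vs ! j" for a
  proof -
    have "\<exists>w. {a, vs ! j} = {w, p w} \<and> rk (p w) < rk w" using A that(1) by (rule bspec)
    then obtain w where w: "{a, vs ! j} = {w, p w}" "rk (p w) < rk w" by (elim exE conjE)
    from w(1) that(3) have "(a = w \<and> vs ! j = p w) \<or> (a = p w \<and> vs ! j = w)"
      by (simp add: doubleton_eq_iff)
    then show ?thesis
    proof
      assume h: "a = w \<and> vs ! j = p w"
      then have "rk (vs ! j) < rk a" using w(2) by simp
      then show ?thesis using mx[OF that(2)] by simp
    next
      assume "a = p w \<and> vs ! j = w" then show ?thesis by simp
    qed
  qed
  define j0 where "j0 = (if j = 0 then n - 1 else j - 1)"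
  have j0n: "j0 < n" and nxj0: "nx j0 = j" using j len unfolding j0_def nx_def n_def by auto
  have nxn: "nx j < n" using j len unfolding nx_def by auto
  have neq1: "nx j \<noteq> j" "j0 \<noteq> j" "nx j \<noteq> j0" using j len unfolding nx_def j0_def n_def by auto
  have "{vs ! nx j, vs ! j} \<in> Fu" using E[OF j(1)] by (simp add: insert_commute)
  moreover have "vs ! nx j \<noteq> vs ! j" using d neq1(1) nxn j(1) unfolding n_def by (simp add: nth_eq_iff_index_eq)
  ultimately have a1: "vs ! nx j = p (vs ! j)" using key nxn unfolding n_def by auto
  have "{vs ! j0, vs ! j} \<in> Fu" using E[OF j0n] nxj0 by simp
  moreover have "vs ! j0 \<noteq> vs ! j" using d neq1(2) j0n j(1) unfolding n_def by (simp add: nth_eq_iff_index_eq)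
  ultimately have a2: "vs ! j0 = p (vs ! j)" using key j0n unfolding n_def by auto
  have "vs ! nx j \<noteq> vs ! j0" using d neq1(3) j0n nxn unfolding n_def by (simp add: nth_eq_iff_index_eq)
  then show False using a1 a2 by simp
qed

lemma out_tree:
  fixes \<tau> :: nat
  assumes fin: "finite S" and x: "x \<in> V"
    and SV: "\<forall>f\<in>S. fst f \<subseteq> V"
    and reach: "\<forall>w\<in>V-{x}. \<exists>vs ts. jrn S vs ts \<and> hd vs = x \<and> last vs = w \<and> ts \<noteq> [] \<and> \<tau> \<le> hd ts"
  shows "\<exists>F\<subseteq>S. spanning_tree V (underlying F) \<and>
     (\<forall>w\<in>V-{x}. \<exists>vs ts. jrn F vs ts \<and> hd vs = x \<and> last vs = w \<and> ts \<noteq> [] \<and> \<tau> \<le> hd ts)"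
proof -
  define A where "A w = {last ts | vs ts. jrn S vs ts \<and> hd vs = x \<and> last vs = w \<and> ts \<noteq> [] \<and> \<tau> \<le> hd ts}" for w
  define arr where "arr w = Min (A w)" for w
  have Asub: "A w \<subseteq> snd ` S" for w
  proof
    fix s assume "s \<in> A w"
    then obtain vs ts where j: "jrn S vs ts" "ts \<noteq> []" "s = last ts" unfolding A_def by blast
    then show "s \<in> snd ` S" using jrn_butlast[OF j(1,2)] by force
  qed
  have Afin: "finite (A w)" for w using Asub fin by (meson finite_imageI finite_subset)
  have arrA: "arr w \<in> A w" if "w \<in> V - {x}" for w
  proof -
    have "A w \<noteq> {}" using reach that unfolding A_def by blast
    then show ?thesis unfolding arr_def using Afin by simp
  qed
  have arrle: "arr w \<le> s" if "s \<in> A w" for w s unfolding arr_def using Afin that by simp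
  have parex: "\<exists>p. ({p,w}, arr w) \<in> S \<and> p \<noteq> w \<and> p \<in> V \<and> (p = x \<or> (p \<noteq> x \<and> arr p < arr w)) \<and> \<tau> \<le> arr w"
    if w: "w \<in> V - {x}" for w
  proof -
    obtain vs ts where j: "jrn S vs ts" "hd vs = x" "last vs = w" "ts \<noteq> []" "\<tau> \<le> hd ts" "last ts = arr w"
      using arrA[OF w] unfolding A_def by (smt (verit) mem_Collect_eq)
    note B = jrn_butlast[OF j(1,4)]
    define p where "p = last (butlast vs)"
    have e: "({p,w}, arr w) \<in> S" using B j unfolding p_def by simp
    have pw: "p \<noteq> w" using B j(3) unfolding p_def by (metis last_in_set)
    have pV: "p \<in> V" using SV e by force
    have so: "sorted_wrt (<) ts" using j(1) unfolding jrn_def by simp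
    have ta: "\<tau> \<le> arr w" using j(4,5,6) sorted_hd_le[OF so, of "last ts"] last_in_set[OF j(4)] by simp
    have "p = x \<or> (p \<noteq> x \<and> arr p < arr w)"
    proof (cases "butlast ts = []")
      case True
      then have "length (butlast vs) = 1" using B unfolding jrn_def by simp
      then have "butlast vs = [hd (butlast vs)]" by (cases "butlast vs") auto
      then have "p = hd vs" using B unfolding p_def by (metis last.simps)
      then show ?thesis using j(2) by simp
    next
      case False
      have j2: "jrn S (butlast vs) (butlast ts)" using B by simp
      have "last (butlast ts) \<in> A p" unfolding A_def p_def
        using j2 B False j(2,5) by fastforce
      then have "arr p \<le> last (butlast ts)" by (rule arrle)
      moreover have "last (butlast ts) < last ts" using B False by simp
      moreover have "p \<noteq> x"
      proof
        assume px: "p = x"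
        have d: "distinct (butlast vs)" using j2 unfolding jrn_def by simp
        have L: "length (butlast vs) = Suc (length (butlast ts))" using j2 unfolding jrn_def by simp
        have "hd (butlast vs) = last (butlast vs)" using px B j(2) unfolding p_def by simp
        moreover have bv: "butlast vs \<noteq> []" using B by simp
        ultimately have "butlast vs ! 0 = butlast vs ! (length (butlast vs) - 1)"
          using hd_conv_nth[OF bv] last_conv_nth[OF bv] by metis
        then have "0 = length (butlast vs) - 1" using d L by (simp add: nth_eq_iff_index_eq)
        then show False using L False by (metis diff_Suc_1 length_0_conv)
      qed
      ultimately show ?thesis using j(6) by simp
    qed
    then show ?thesis using e pw pV ta by blast
  qed
  then obtain par where par: "\<And>w. w \<in> V - {x} \<Longrightarrow> ({par w, w}, arr w) \<in> S \<and> par w \<noteq> w \<and> par w \<in> V \<and>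
      (par w = x \<or> (par w \<noteq> x \<and> arr (par w) < arr w)) \<and> \<tau> \<le> arr w"
    by metis
  define F where "F = (\<lambda>w. ({w, par w}, arr w)) ` (V - {x})"
  define rk where "rk y = (if y = x then 0 else Suc (arr y))" for y
  have rkpar: "rk (par w) < rk w" if "w \<in> V - {x}" for w
    using par[OF that] that unfolding rk_def by auto
  have FS: "F \<subseteq> S" unfolding F_def using par by (auto simp: insert_commute)
  have uF: "underlying F = (\<lambda>w. {w, par w}) ` (V - {x})" unfolding underlying_def F_def by (simp add: image_image)
  have J: "\<exists>vs ts. jrn F vs ts \<and> hd vs = x \<and> last vs = w \<and> ts \<noteq> [] \<and> \<tau> \<le> hd ts \<and> last ts = arr w \<and>
      (\<forall>y\<in>set vs. y = x \<or> (y \<in> V - {x} \<and> arr y \<le> arr w))" if "w \<in> V - {x}" for w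
    using that
  proof (induction "rk w" arbitrary: w rule: less_induct)
    case less
    note P = par[OF less.prems]
    have eF: "({par w, w}, arr w) \<in> F" unfolding F_def using less.prems by (auto simp: insert_commute)
    show ?case
    proof (cases "par w = x")
      case True
      have "jrn F [x,w] [arr w]" unfolding jrn_def using eF True less.prems by auto
      then show ?thesis using P less.prems by (intro exI[of _ "[x,w]"] exI[of _ "[arr w]"]) auto
    next
      case False
      then have pV: "par w \<in> V - {x}" and lt: "arr (par w) < arr w" using P by auto
      obtain vs ts where j: "jrn F vs ts" "hd vs = x" "last vs = par w" "ts \<noteq> []" "\<tau> \<le> hd ts"
        "last ts = arr (par w)" "\<forall>y\<in>set vs. y = x \<or> (y \<in> V - {x} \<and> arr y \<le> arr (par w))"
        using less.hyps[OF rkpar[OF less.prems] pV] by blast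
      have nin: "w \<notin> set vs" using j(7) lt less.prems by fastforce
      have so: "sorted_wrt (<) ts" using j(1) unfolding jrn_def by simp
      have slt: "\<forall>s\<in>set ts. s < arr w" using sorted_le_last[OF so] j(6) lt by fastforce
      have "jrn F (vs@[w]) (ts@[arr w])" using jrn_snoc[OF j(1) nin] eF j(3) slt by simp
      moreover have "hd (vs@[w]) = x" using j(1,2) unfolding jrn_def by (cases vs) auto
      moreover have "hd (ts@[arr w]) = hd ts" using j(4) by simp
      moreover have "\<forall>y\<in>set (vs@[w]). y = x \<or> (y \<in> V - {x} \<and> arr y \<le> arr w)"
        using j(7) lt less.prems by fastforce
      ultimately show ?thesis using j(5) by (intro exI[of _ "vs@[w]"] exI[of _ "ts@[arr w]"]) auto
    qed
  qed
  define R where "R = {(a,b). {a,b} \<in> underlying F}"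
  have symR: "sym (R\<^sup>*)" unfolding R_def by (intro sym_rtrancl) (auto simp: sym_def insert_commute)
  have xR: "(x,w) \<in> R\<^sup>*" if "w \<in> V" for w
    using that
  proof (induction "rk w" arbitrary: w rule: less_induct)
    case less
    show ?case
    proof (cases "w = x")
      case True then show ?thesis by simp
    next
      case False
      then have wV: "w \<in> V - {x}" using less.prems by simp
      have "(par w, w) \<in> R" unfolding R_def uF using wV by (auto simp: insert_commute)
      moreover have "(x, par w) \<in> R\<^sup>*" using less.hyps[OF rkpar[OF wV]] par[OF wV] by blast
      ultimately show ?thesis by simp
    qed
  qed
  have Fe: "\<forall>e\<in>underlying F. e \<subseteq> V \<and> card e = 2" unfolding uF
  proof
    fix e assume "e \<in> (\<lambda>w. {w, par w}) ` (V - {x})"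
    then obtain w where w: "w \<in> V - {x}" "e = {w, par w}" by blast
    then show "e \<subseteq> V \<and> card e = 2" using par[OF w(1)] by auto
  qed
  have conn: "connected_graph V (underlying F)" unfolding connected_graph_def
  proof (intro ballI)
    fix u v assume uv: "u \<in> V" "v \<in> V"
    have "(u,x) \<in> R\<^sup>*" using xR[OF uv(1)] symR by (meson symD)
    then have "(u,v) \<in> R\<^sup>*" using xR[OF uv(2)] by simp
    then show "\<exists>vs. static_path (underlying F) vs \<and> set vs \<subseteq> V \<and> hd vs = u \<and> last vs = v"
      using walk_path[of u v "underlying F" V] uv Fe unfolding R_def by blast
  qed
  have nc: "\<not> has_cycle (underlying F)"
    by (rule no_cycle_rank[where p = par and rk = rk]) (auto simp: uF rkpar)
  have "spanning_tree V (underlying F)" unfolding spanning_tree_def using Fe conn nc by blast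
  moreover have "\<forall>w\<in>V-{x}. \<exists>vs ts. jrn F vs ts \<and> hd vs = x \<and> last vs = w \<and> ts \<noteq> [] \<and> \<tau> \<le> hd ts"
    using J by blast
  ultimately show ?thesis using FS by blast
qed

lemma tc_jrn: "temporally_connected V S \<Longrightarrow> u \<in> V \<Longrightarrow> w \<in> V \<Longrightarrow> u \<noteq> w \<Longrightarrow>
   \<exists>vs ts. jrn S vs ts \<and> hd vs = u \<and> last vs = w \<and> ts \<noteq> []"
proof -
  assume "temporally_connected V S" "u \<in> V" "w \<in> V" "u \<noteq> w"
  then obtain vs ts where j: "jrn S vs ts" "hd vs = u" "last vs = w"
    unfolding temporally_connected_def tp_jrn by blast
  have "ts \<noteq> []"
  proof
    assume "ts = []" then have "vs = [hd vs]" using j(1) unfolding jrn_def by (cases vs) auto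
    then have "last vs = hd vs" by (metis last.simps)
    then show False using j \<open>u \<noteq> w\<close> by simp
  qed
  then show ?thesis using j by blast
qed

lemma jrn_first: "jrn S vs ts \<Longrightarrow> ts \<noteq> [] \<Longrightarrow> ({hd vs, vs ! 1}, hd ts) \<in> S"
  unfolding jrn_def by (cases vs; cases ts) auto

theorem lemma13:
  fixes V :: "'v set" and E :: "'v tedge set" and T :: nat and X :: "'v set" and d :: nat
    and S :: "'v tedge set"
  assumes "temporal_graph V E T"
    and "happy E"
    and "temporally_connected V E"
    and "vertex_cover V (underlying E) X"
    and "card X = d"
    and "minimum_temporal_spanner V E S"
  shows "\<exists>k roots trees extra.
     k \<le> d \<and>
     (\<forall>i<k. roots i \<in> X \<and> temporal_out_tree V E (roots i) (trees i)) \<and>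
     (\<forall>v\<in>V - X. extra v \<subseteq> E \<and> card (extra v) \<le> 1 \<and> (\<forall>f\<in>extra v. v \<in> fst f)) \<and>
     S = (\<Union>i<k. trees i) \<union> (\<Union>v\<in>V - X. extra v)"
proof -
  have Vfin: "finite V" and Eed: "\<And>e t. (e,t) \<in> E \<Longrightarrow> e \<subseteq> V \<and> card e = 2 \<and> t \<le> T"
    using assms(1) unfolding temporal_graph_def by auto
  have "E \<subseteq> Pow V \<times> {..T}" using Eed by auto
  then have Efin: "finite E" using Vfin by (meson finite_Pow_iff finite_SigmaI finite_atMost finite_subset)
  have hap: "happy E" by fact
  have SE: "S \<subseteq> E" and Stc: "temporally_connected V S"
    and Smin: "\<And>S'. temporal_spanner V E S' \<Longrightarrow> card S \<le> card S'"
    using assms(6) unfolding minimum_temporal_spanner_def temporal_spanner_def by auto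
  have Sfin: "finite S" using SE Efin finite_subset by blast
  have XV: "X \<subseteq> V" and cov: "\<And>e. e \<in> underlying E \<Longrightarrow> e \<inter> X \<noteq> {}"
    using assms(4) unfolding vertex_cover_def by auto
  have Xfin: "finite X" using XV Vfin finite_subset by blast
  have SV: "\<forall>f\<in>S. fst f \<subseteq> V" using SE Eed by force
  define lab where "lab v = {t. \<exists>e. (e,t) \<in> S \<and> v \<in> e}" for v
  define mu where "mu v = Min (lab v)" for v
  have labfin: "finite (lab v)" for v
  proof -
    have "lab v \<subseteq> snd ` S" unfolding lab_def by force
    then show ?thesis using Sfin finite_subset by blast
  qed
  have mule: "mu v \<le> t" if "(e,t) \<in> S" "v \<in> e" for v e t
    unfolding mu_def using labfin that unfolding lab_def by (intro Min_le) auto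
  have mu_first: "mu (hd vs) \<le> hd ts" if "jrn S vs ts" "ts \<noteq> []" for vs ts
    using jrn_first[OF that] mule by blast
  define D where "D x = {v \<in> V - X. ({v,x}, mu v) \<in> S}" for x
  define tau where "tau x = (if D x = {} then 0 else Max (mu ` D x))" for x
  have Dfin: "finite (D x)" for x unfolding D_def using Vfin by simp
  have reachX: "\<forall>w\<in>V-{x}. \<exists>vs ts. jrn S vs ts \<and> hd vs = x \<and> last vs = w \<and> ts \<noteq> [] \<and> tau x \<le> hd ts"
    if xX: "x \<in> X" for x
  proof
    fix w assume w: "w \<in> V - {x}"
    have xV: "x \<in> V" using xX XV by auto
    show "\<exists>vs ts. jrn S vs ts \<and> hd vs = x \<and> last vs = w \<and> ts \<noteq> [] \<and> tau x \<le> hd ts"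
    proof (cases "D x = {}")
      case True
      then show ?thesis using tc_jrn[OF Stc xV, of w] w unfolding tau_def by auto
    next
      case False
      have "Max (mu ` D x) \<in> mu ` D x" using False Dfin by simp
      then obtain vm where vm0: "vm \<in> D x" "mu vm = Max (mu ` D x)" by (metis imageE)
      then have vm: "vm \<in> D x" "mu vm = tau x" unfolding tau_def using False by auto
      have vmV: "vm \<in> V - X" and evm: "({vm,x}, tau x) \<in> S" using vm unfolding D_def by auto
      have vmx: "vm \<noteq> x" using vmV xX by auto
      show ?thesis
      proof (cases "w = vm")
        case True
        have "jrn S [x,vm] [tau x]" unfolding jrn_def using evm vmx by (auto simp: insert_commute)
        then show ?thesis using True by (intro exI[of _ "[x,vm]"] exI[of _ "[tau x]"]) auto
      next
        case False
        obtain vs ts where j: "jrn S vs ts" "hd vs = vm" "last vs = w" "ts \<noteq> []"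
          using tc_jrn[OF Stc, of vm w] vmV w False by auto
        have "tau x \<le> hd ts" using mu_first[OF j(1,4)] j(2) vm(2) by simp
        moreover have "({x,vm}, tau x) \<in> S" using evm by (simp add: insert_commute)
        ultimately show ?thesis
          using prepend[OF hap SE _ j(1,2,3), of x "tau x"] w False by auto
      qed
    qed
  qed
  have "\<forall>x\<in>X. \<exists>F\<subseteq>S. spanning_tree V (underlying F) \<and>
     (\<forall>w\<in>V-{x}. \<exists>vs ts. jrn F vs ts \<and> hd vs = x \<and> last vs = w \<and> ts \<noteq> [] \<and> tau x \<le> hd ts)"
  proof
    fix x assume "x \<in> X"
    then show "\<exists>F\<subseteq>S. spanning_tree V (underlying F) \<and>
     (\<forall>w\<in>V-{x}. \<exists>vs ts. jrn F vs ts \<and> hd vs = x \<and> last vs = w \<and> ts \<noteq> [] \<and> tau x \<le> hd ts)"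
      using out_tree[OF Sfin _ SV reachX] XV by blast
  qed
  then obtain TR where TR: "\<And>x. x \<in> X \<Longrightarrow> TR x \<subseteq> S \<and> spanning_tree V (underlying (TR x)) \<and>
     (\<forall>w\<in>V-{x}. \<exists>vs ts. jrn (TR x) vs ts \<and> hd vs = x \<and> last vs = w \<and> ts \<noteq> [] \<and> tau x \<le> hd ts)"
    by metis
  obtain h where h: "bij_betw h {0..<card X} X" using ex_bij_betw_nat_finite[OF Xfin] by blast
  have hX: "i < d \<Longrightarrow> h i \<in> X" for i using h assms(5) by (auto dest: bij_betw_apply)
  have Xh: "x \<in> X \<Longrightarrow> \<exists>i<d. h i = x" for x using h assms(5) unfolding bij_betw_def by force
  define extra where "extra v = {f \<in> S. v \<in> fst f \<and> snd f = mu v}" for v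
  define S' where "S' = (\<Union>i<d. TR (h i)) \<union> (\<Union>v\<in>V - X. extra v)"
  have TRS': "TR x \<subseteq> S'" if "x \<in> X" for x
    using Xh[OF that] unfolding S'_def by blast
  have S'S: "S' \<subseteq> S" unfolding S'_def extra_def using TR hX by blast
  have tcS': "temporally_connected V S'" unfolding temporally_connected_def
  proof (intro ballI impI)
    fix u w assume uw: "u \<in> V" "w \<in> V" "u \<noteq> w"
    show "temporal_path S' u w"
    proof (cases "u \<in> X")
      case True
      then obtain vs ts where "jrn (TR u) vs ts" "hd vs = u" "last vs = w" using TR[OF True] uw by blast
      then show ?thesis unfolding tp_jrn using jrn_mono TRS'[OF True] by blast
    next
      case False
      obtain vs ts where j: "jrn S vs ts" "hd vs = u" "last vs = w" "ts \<noteq> []"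
        using tc_jrn[OF Stc uw] by blast
      have "hd ts \<in> lab u" using jrn_first[OF j(1,4)] j(2) unfolding lab_def by auto
      then have "lab u \<noteq> {}" by auto
      then have "mu u \<in> lab u" unfolding mu_def using labfin by simp
      then obtain e where e: "(e, mu u) \<in> S" "u \<in> e" unfolding lab_def by auto
      then have "card e = 2" using SE Eed by blast
      then obtain a b where ab: "e = {a,b}" "a \<noteq> b" by (auto simp: card_2_iff)
      obtain x where ex: "e = {u,x}" "x \<noteq> u" using ab e(2) by (auto simp: insert_commute)
      have "e \<in> underlying E" unfolding underlying_def using e SE by force
      then have xX: "x \<in> X" using cov False ex by auto
      have uD: "u \<in> D x" unfolding D_def using uw False e ex by auto
      have mt: "mu u \<le> tau x" unfolding tau_def using uD Dfin by auto
      have eS': "({u,x}, mu u) \<in> S'" unfolding S'_def extra_def using e ex uw False by auto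
      show ?thesis
      proof (cases "w = x")
        case True
        have "jrn S' [u,x] [mu u]" unfolding jrn_def using eS' ex by auto
        then show ?thesis unfolding tp_jrn using True by fastforce
      next
        case False
        then obtain vs' ts' where j': "jrn (TR x) vs' ts'" "hd vs' = x" "last vs' = w" "tau x \<le> hd ts'"
          using TR[OF xX] uw by blast
        have j'': "jrn S' vs' ts'" using jrn_mono[OF j'(1) TRS'[OF xX]] .
        have "S' \<subseteq> E" using S'S SE by blast
        from prepend[OF hap this eS' j'' j'(2,3)] False uw(3) j'(4) mt
        show ?thesis unfolding tp_jrn by fastforce
      qed
    qed
  qed
  have "temporal_spanner V E S'" unfolding temporal_spanner_def using tcS' S'S SE by blast
  then have "card S \<le> card S'" by (rule Smin)
  then have S'eq: "S' = S" using card_seteq[OF Sfin S'S] by blast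
  have ot: "temporal_out_tree V E (h i) (TR (h i))" if "i < d" for i
  proof -
    have x: "h i \<in> X" using hX[OF that] .
    note T = TR[OF x]
    have "TR (h i) \<subseteq> E" using T SE by blast
    moreover have "h i \<in> V" using x XV by blast
    moreover have "\<forall>v\<in>V. v \<noteq> h i \<longrightarrow> temporal_path (TR (h i)) (h i) v"
    proof (intro ballI impI)
      fix v assume "v \<in> V" "v \<noteq> h i"
      then obtain vs ts where "jrn (TR (h i)) vs ts" "hd vs = h i" "last vs = v" using T by blast
      then show "temporal_path (TR (h i)) (h i) v" unfolding tp_jrn by blast
    qed
    ultimately show ?thesis unfolding temporal_out_tree_def using T by blast
  qed
  have ex: "extra v \<subseteq> E \<and> card (extra v) \<le> 1 \<and> (\<forall>f\<in>extra v. v \<in> fst f)" for v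
  proof -
    have fin: "finite (extra v)" unfolding extra_def using Sfin by simp
    have "\<forall>f\<in>extra v. \<forall>g\<in>extra v. f = g"
    proof (intro ballI)
      fix f g assume fg: "f \<in> extra v" "g \<in> extra v"
      show "f = g"
      proof (rule ccontr)
        assume ne: "f \<noteq> g"
        obtain e1 t1 where f: "f = (e1,t1)" by (cases f)
        obtain e2 t2 where g: "g = (e2,t2)" by (cases g)
        have "(e1,t1) \<in> E" "(e2,t2) \<in> E" "v \<in> e1" "v \<in> e2" "t1 = t2"
          using fg SE f g unfolding extra_def by auto
        moreover have "\<forall>(e,t)\<in>E. \<forall>(e',t')\<in>E. (e,t) \<noteq> (e',t') \<and> e \<inter> e' \<noteq> {} \<longrightarrow> t \<noteq> t'"
          using hap unfolding happy_def by blast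
        ultimately have "(e1,t1) \<noteq> (e2,t2) \<longrightarrow> t1 \<noteq> t2" by blast
        then show False using ne f g \<open>t1 = t2\<close> by simp
      qed
    qed
    then have "card (extra v) \<le> 1" using card_le_Suc0_iff_eq[OF fin] by simp
    then show ?thesis using SE unfolding extra_def by auto
  qed
  have c1: "\<forall>i<d. h i \<in> X \<and> temporal_out_tree V E (h i) (TR (h i))" using hX ot by blast
  have c2: "\<forall>v\<in>V - X. extra v \<subseteq> E \<and> card (extra v) \<le> 1 \<and> (\<forall>f\<in>extra v. v \<in> fst f)" using ex by blast
  have c3: "S = (\<Union>i<d. TR (h i)) \<union> (\<Union>v\<in>V - X. extra v)" using S'eq unfolding S'_def by simp
  show ?thesis
    apply (rule exI[of _ d], rule exI[of _ h], rule exI[of _ "\<lambda>i. TR (h i)"], rule exI[of _ extra])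
    using c1 c2 c3 by simp
qed

end
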